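(* Let $n,d\ge1$. Inside $\mathbb P(R_d)$, identified with the Plücker space of $\mathbb G(n-1,n+d-1)$ as in the context, the intersection $\mathrm{Split}_d(\mathbb P^n)\cap\mathbb G(n-1,n+d-1)$ contains every $(n-1)$-dimensional linear subspace $\Lambda\subset\mathbb P^{n+d-1}$ that is $(n-1)$-secant to $\Sigma$, i.e. such that $\Lambda\cap\Sigma$ contains a subscheme of $\Sigma$ of length $n-1$.
   Context: $K$ is an algebraically closed field of characteristic $0$, $R=K[x_0,\dots,x_n]$, $R_d$ its degree-$d$ part, $\mathbb P(R_d)$ the projective space of degree-$d$ forms up to scalars; $\mathrm{Split}_d(\mathbb P^n)\subset\mathbb P(R_d)$ is the set of classes $[L_1\cdots L_d]$ with $L_i\in R_1$. Let $z_0,\dots,z_{n+d-1}$ be coordinates on $\mathbb P^{n+d-1}$ and $\Sigma=\{[t_0^{n+d-1}:t_0^{n+d-2}t_1:\dots:t_1^{n+d-1}]\}$ the standard rational normal curve. $\mathbb G(n-1,n+d-1)$ is the Grassmannian of $(n-1)$-spaces of $\mathbb P^{n+d-1}$ with (dual) Plücker coordinates: if $\Lambda$ is cut out by independent equations $\sum_j u_{i,j}z_j=0$, $i=1,\dots,d$, its coordinates are the maximal minors $p_{i_1\cdots i_d}=\det(u_{a,i_b})$. For $0\ne L=u_0x_0+\dots+u_nx_n\in R_1$ let $\phi(L)$ be the $(n-1)$-space $u_0z_j+\dots+u_nz_{j+n}=0$, $j=0,\dots,d-1$; its Plücker coordinates form a basis of $K[u_0,\dots,u_n]_d$, so there is a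 unique linear isomorphism $\mathbb P(R_d)\to\mathbb P^{\binom{n+d}{d}-1}$ sending $[L^d]$ to the Plücker point of $\phi(L)$ for all $L$. Through it $\mathbb G(n-1,n+d-1)$ is regarded as a subvariety of $\mathbb P(R_d)$. *)

theory Defs
  imports "HOL-Combinatorics.Permutations" "HOL-Computational_Algebra.Polynomial"
begin

text \<open>Points of K^(n+1) are represented by functions x :: nat => 'a (only x 0..x n matter).
  A linear form u_0 x_0 + ... + u_n x_n is represented by its coefficient function u.\<close>

definition lin_form :: "nat \<Rightarrow> (nat \<Rightarrow> 'a::comm_ring_1) \<Rightarrow> (nat \<Rightarrow> 'a) \<Rightarrow> 'a" where
  "lin_form n u x = (\<Sum>i\<le>n. u i * x i)"

definition nonzero_lin :: "nat \<Rightarrow> (nat \<Rightarrow> 'a::zero) \<Rightarrow> bool" where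
  "nonzero_lin n u \<longleftrightarrow> (\<exists>i\<le>n. u i \<noteq> 0)"

definition mon_exps :: "nat \<Rightarrow> nat \<Rightarrow> (nat \<Rightarrow> nat) set" where
  "mon_exps n d = {\<alpha>. (\<forall>i. n < i \<longrightarrow> \<alpha> i = 0) \<and> (\<Sum>i\<le>n. \<alpha> i) = d}"

text \<open>R_d: degree-d forms in x_0..x_n, as (polynomial) functions.\<close>
definition forms :: "nat \<Rightarrow> nat \<Rightarrow> ((nat \<Rightarrow> 'a::comm_ring_1) \<Rightarrow> 'a) set" where
  "forms n d = {f. \<exists>c. f = (\<lambda>x. \<Sum>\<alpha>\<in>mon_exps n d. c \<alpha> * (\<Prod>i\<le>n. x i ^ \<alpha> i))}"

definition det_nat :: "nat \<Rightarrow> (nat \<Rightarrow> nat \<Rightarrow> 'a::comm_ring_1) \<Rightarrow> 'a" where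
  "det_nat k M = (\<Sum>\<sigma> | \<sigma> permutes {..<k}. of_int (sign \<sigma>) * (\<Prod>a<k. M a (\<sigma> a)))"

definition dsubsets :: "nat \<Rightarrow> nat \<Rightarrow> nat set set" where
  "dsubsets N d = {I. I \<subseteq> {..<N} \<and> card I = d}"

text \<open>Pluecker coordinate p_I = det(u_{a,i_b}) of the d x N equation matrix U,
  with I = {i_0 < ... < i_(d-1)}.\<close>
definition plucker :: "nat \<Rightarrow> (nat \<Rightarrow> nat \<Rightarrow> 'a::comm_ring_1) \<Rightarrow> nat set \<Rightarrow> 'a" where
  "plucker d U I = det_nat d (\<lambda>a b. U a (sorted_list_of_set I ! b))"

definition indep_rows :: "nat \<Rightarrow> nat \<Rightarrow> (nat \<Rightarrow> nat \<Rightarrow> 'a::field) \<Rightarrow> bool" where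
  "indep_rows d N U \<longleftrightarrow> (\<forall>c. (\<forall>j<N. (\<Sum>a<d. c a * U a j) = 0) \<longrightarrow> (\<forall>a<d. c a = 0))"

text \<open>Equation matrix of phi(L): row j is u_0 z_j + ... + u_n z_(j+n).\<close>
definition phi_matrix :: "nat \<Rightarrow> (nat \<Rightarrow> 'a::zero) \<Rightarrow> nat \<Rightarrow> nat \<Rightarrow> 'a" where
  "phi_matrix n u = (\<lambda>a c. if a \<le> c \<and> c \<le> a + n then u (c - a) else 0)"

definition bform :: "nat \<Rightarrow> (nat \<Rightarrow> 'a::comm_ring_1) \<Rightarrow> 'a \<Rightarrow> 'a \<Rightarrow> 'a" where
  "bform m c t0 t1 = (\<Sum>j\<le>m. c j * t0 ^ (m - j) * t1 ^ j)"

text \<open>Lambda = {sum_j U a j z_j = 0, a<d} in P^(n+d-1) is (n-1)-secant to Sigma: pulling back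
  its equations along t |-> [t0^(n+d-1): ... : t1^(n+d-1)] gives binary forms of degree n+d-1,
  and Lambda \<inter> Sigma contains a length-(n-1) subscheme of Sigma = P^1, i.e. the zero scheme of a
  nonzero binary form g of degree n-1 divides all these pulled-back equations.\<close>
definition secant :: "nat \<Rightarrow> nat \<Rightarrow> (nat \<Rightarrow> nat \<Rightarrow> 'a::comm_ring_1) \<Rightarrow> bool" where
  "secant n d U \<longleftrightarrow> (\<exists>g. (\<exists>j\<le>n - 1. g j \<noteq> 0) \<and>
     (\<forall>a<d. \<exists>q. \<forall>t0 t1. bform (n + d - 1) (U a) t0 t1 = bform (n - 1) g t0 t1 * bform d q t0 t1))"

definition alg_closed :: "'a::field itself \<Rightarrow> bool" where
  "alg_closed _ \<longleftrightarrow> (\<forall>p::'a poly. 0 < degree p \<longrightarrow> (\<exists>x. poly p x = 0))"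

end

theory Submission
  imports Defs "Jordan_Normal_Form.Determinant"
begin



lemma det_nat_jnf: "det_nat k M = det (mat k k (\<lambda>(a,b). M a b))"
  unfolding det_nat_def det_def by (auto simp: atLeast0LessThan intro!: sum.cong prod.cong)

definition stk :: "nat \<Rightarrow> (nat\<Rightarrow>nat\<Rightarrow>'a) \<Rightarrow> (nat\<Rightarrow>'a) \<Rightarrow> 'a::comm_ring_1 mat" where
  "stk d W z = mat (Suc d) (Suc d) (\<lambda>(r,c). if r < d then W r c else z c)"

lemma stk_carrier[simp]: "stk d W z \<in> carrier_mat (Suc d) (Suc d)"
  by (simp add: stk_def)

lemma mat_mult_entry:
  assumes "r < Suc d" "c < Suc d"
  shows "(mat (Suc d) (Suc d) f * mat (Suc d) (Suc d) g) $$ (r,c) = (\<Sum>e\<le>d. f (r,e) * g (e,c))"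
  using assms by (simp add: scalar_prod_def atLeast0LessThan lessThan_Suc_atMost)

lemma det_D:
  fixes z :: "nat \<Rightarrow> 'a::field"
  assumes zG: "\<forall>b<d. (\<Sum>e\<le>d. z e * G e b) = 0" and i: "i \<le> d" and zi: "z i \<noteq> 0"
  shows "det_nat d (\<lambda>a b. \<Sum>e\<le>d. W a e * G e b) = det (stk d W z) *
     det (mat (Suc d) (Suc d) (\<lambda>(e,b). if b < d then G e b else if e = i then 1 / z i else 0))"
proof -
  define B where "B = mat (Suc d) (Suc d) (\<lambda>(e,b). if b < d then G e b else if e = i then 1 / z i else 0)"
  define P where "P = stk d W z * B"
  have Pc: "P \<in> carrier_mat (Suc d) (Suc d)" unfolding P_def B_def by (rule mult_carrier_mat[OF stk_carrier]) simp
  have P_ent: "P $$ (r,c) = (\<Sum>e\<le>d. (if r < d then W r e else z e) * (if c < d then G e c else if e = i then 1 / z i else 0))"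
    if "r < Suc d" "c < Suc d" for r c
    unfolding P_def B_def stk_def by (subst mat_mult_entry[OF that]) simp
  have "det P = (\<Sum>c<Suc d. P $$ (d,c) * cofactor P d c)"
    by (rule laplace_expansion_row[OF Pc]) simp
  also have "\<dots> = P $$ (d,d) * cofactor P d d"
  proof -
    have "\<forall>c<d. P $$ (d,c) = 0" using zG by (simp add: P_ent)
    then show ?thesis by (simp add: lessThan_Suc)
  qed
  also have "P $$ (d,d) = 1"
  proof -
    have "P $$ (d,d) = (\<Sum>e\<le>d. (if e = i then z e * (1 / z i) else 0))"
      by (simp add: P_ent if_distrib cong: if_cong)
    also have "\<dots> = 1" using i zi by simp
    finally show ?thesis .
  qed
  finally have dP: "det P = cofactor P d d" by simp
  have "mat_delete P d d = mat d d (\<lambda>(a,b). \<Sum>e\<le>d. W a e * G e b)"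
    using Pc by (intro eq_matI) (auto simp: mat_delete_def P_ent)
  then have "det P = det_nat d (\<lambda>a b. \<Sum>e\<le>d. W a e * G e b)"
    using dP by (simp add: cofactor_def det_nat_jnf)
  moreover have "det P = det (stk d W z) * det B"
    unfolding P_def by (rule det_mult[of _ "Suc d"]) (auto simp: B_def)
  ultimately show ?thesis by (simp add: B_def)
qed




definition Wl :: "'a::comm_ring_1 \<Rightarrow> 'a \<Rightarrow> nat \<Rightarrow> nat \<Rightarrow> 'a" where
  "Wl \<alpha> \<beta> r c = (if c = r then \<alpha> else if c = Suc r then \<beta> else 0)"

lemma det_E: "det (stk m (Wl \<alpha> \<beta>) z) = (\<Sum>e\<le>m. z e * \<alpha>^e * (-\<beta>)^(m-e))"
proof (induction m arbitrary: z)
  case 0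
  have "det (stk 0 (Wl \<alpha> \<beta>) z) = (\<Sum>r<Suc 0. stk 0 (Wl \<alpha> \<beta>) z $$ (r,0) * cofactor (stk 0 (Wl \<alpha> \<beta>) z) r 0)"
    by (rule laplace_expansion_column[OF stk_carrier]) simp
  also have "\<dots> = z 0"
    by (simp add: cofactor_def stk_def mat_delete_def det_def)
  finally show ?case by simp
next
  case (Suc m)
  let ?A = "stk (Suc m) (Wl \<alpha> \<beta>) z"
  have dA: "dim_row ?A = Suc (Suc m)" "dim_col ?A = Suc (Suc m)" by (auto simp: stk_def)
  have "det ?A = (\<Sum>r<Suc (Suc m). ?A $$ (r,0) * cofactor ?A r 0)"
    by (rule laplace_expansion_column[OF stk_carrier]) simp
  also have "\<dots> = \<alpha> * cofactor ?A 0 0 + z 0 * cofactor ?A (Suc m) 0"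
  proof -
    have "(\<Sum>r<Suc (Suc m). ?A $$ (r,0) * cofactor ?A r 0) =
      (\<Sum>r<Suc m. ?A $$ (r,0) * cofactor ?A r 0) + z 0 * cofactor ?A (Suc m) 0"
      by (simp add: stk_def)
    also have "(\<Sum>r<Suc m. ?A $$ (r,0) * cofactor ?A r 0) = \<alpha> * cofactor ?A 0 0"
      by (subst sum.lessThan_Suc_shift) (simp add: stk_def Wl_def)
    finally show ?thesis .
  qed
  also have "cofactor ?A 0 0 = det (stk m (Wl \<alpha> \<beta>) (\<lambda>c. z (Suc c)))"
  proof -
    have "mat_delete ?A 0 0 = stk m (Wl \<alpha> \<beta>) (\<lambda>c. z (Suc c))"
      by (rule eq_matI) (auto simp: mat_delete_def stk_def Wl_def)
    then show ?thesis by (simp add: cofactor_def)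
  qed
  also have "cofactor ?A (Suc m) 0 = (-1)^(Suc m) * \<beta>^(Suc m)"
  proof -
    let ?B = "mat_delete ?A (Suc m) 0"
    have Bc: "?B \<in> carrier_mat (Suc m) (Suc m)" by (simp add: mat_delete_def stk_def)
    have "det ?B = prod_list (diag_mat ?B)"
      by (rule det_lower_triangular[OF _ Bc]) (auto simp: mat_delete_def stk_def Wl_def)
    also have "\<dots> = \<beta>^(Suc m)"
      unfolding prod_list_diag_prod using Bc
      by (auto simp: mat_delete_def stk_def Wl_def)
    finally show ?thesis by (simp add: cofactor_def)
  qed
  finally have "det ?A = \<alpha> * (\<Sum>e\<le>m. z (Suc e) * \<alpha>^e * (-\<beta>)^(m-e)) + z 0 * ((-1)^(Suc m) * \<beta>^(Suc m))"
    using Suc.IH by simp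
  also have "\<dots> = (\<Sum>e\<le>Suc m. z e * \<alpha>^e * (-\<beta>)^(Suc m-e))"
  proof -
    have "(\<Sum>e\<le>Suc m. z e * \<alpha>^e * (-\<beta>)^(Suc m-e)) = z 0 * (-\<beta>)^(Suc m) + (\<Sum>e\<le>m. z (Suc e) * \<alpha>^(Suc e) * (-\<beta>)^(m-e))"
      by (subst sum.atMost_Suc_shift) simp
    also have "(\<Sum>e\<le>m. z (Suc e) * \<alpha>^(Suc e) * (-\<beta>)^(m-e)) = \<alpha> * (\<Sum>e\<le>m. z (Suc e) * \<alpha>^e * (-\<beta>)^(m-e))"
      unfolding sum_distrib_left by (rule sum.cong) (simp_all add: mult_ac)
    also have "(-\<beta>)^(Suc m) = (-1)^(Suc m) * \<beta>^(Suc m)"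
      by (rule power_minus)
    finally show ?thesis by (simp add: ac_simps)
  qed
  finally show ?case .
qed




lemma stk_dim[simp]: "dim_row (stk d W z) = Suc d" "dim_col (stk d W z) = Suc d"
  by (simp_all add: stk_def)

definition cof :: "nat \<Rightarrow> (nat\<Rightarrow>nat\<Rightarrow>'a) \<Rightarrow> nat \<Rightarrow> 'a::comm_ring_1" where
  "cof d Q e = cofactor (stk d Q (\<lambda>_. 0)) d e"

lemma det_stk_lin: "det (stk d Q z) = (\<Sum>e\<le>d. z e * cof d Q e)"
proof -
  have "det (stk d Q z) = (\<Sum>c<Suc d. stk d Q z $$ (d,c) * cofactor (stk d Q z) d c)"
    by (rule laplace_expansion_row[OF stk_carrier]) simp
  also have "\<dots> = (\<Sum>c<Suc d. z c * cof d Q c)"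
  proof (rule sum.cong[OF refl])
    fix c assume c: "c \<in> {..<Suc d}"
    have "mat_delete (stk d Q z) d c = mat_delete (stk d Q (\<lambda>_. 0)) d c"
      by (rule eq_matI) (auto simp: mat_delete_def stk_def)
    then show "stk d Q z $$ (d,c) * cofactor (stk d Q z) d c = z c * cof d Q c"
      using c by (simp add: cof_def cofactor_def stk_def)
  qed
  finally show ?thesis by (simp add: lessThan_Suc_atMost)
qed

lemma cof_nonzero:
  fixes Q :: "nat \<Rightarrow> nat \<Rightarrow> 'a::field"
  assumes ind: "\<And>c. (\<forall>e\<le>d. (\<Sum>a<d. c a * Q a e) = 0) \<Longrightarrow> (\<forall>a<d. c a = 0)"
  shows "\<exists>i\<le>d. cof d Q i \<noteq> 0"
proof -
  have "det (stk d Q (\<lambda>_. 0)) = 0" by (simp add: det_stk_lin)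
  then obtain v where v: "v \<in> carrier_vec (Suc d)" "v \<noteq> 0\<^sub>v (Suc d)" "stk d Q (\<lambda>_. 0) *\<^sub>v v = 0\<^sub>v (Suc d)"
    using det_0_iff_vec_prod_zero[OF stk_carrier] by blast
  have Qv: "(\<Sum>c\<le>d. Q r c * v $ c) = 0" if r: "r < d" for r
  proof -
    have "(stk d Q (\<lambda>_. 0) *\<^sub>v v) $ r = 0" using v(3) r by simp
    then show ?thesis using r v(1) by (simp add: stk_def scalar_prod_def atLeast0LessThan lessThan_Suc_atMost)
  qed
  obtain i where i: "i \<le> d" "v $ i \<noteq> 0"
  proof -
    have "\<exists>i<Suc d. v $ i \<noteq> 0"
    proof (rule ccontr)
      assume "\<not> ?thesis"
      then have "v = 0\<^sub>v (Suc d)" using v(1) by (intro eq_vecI) auto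
      with v(2) show False by simp
    qed
    then show ?thesis using that by (auto simp: less_Suc_eq_le)
  qed
  show ?thesis
  proof (rule ccontr)
    assume "\<not> ?thesis"
    then have ci: "cof d Q i = 0" using i by auto
    let ?M = "stk d Q (\<lambda>e. if e = i then 1 else 0)"
    have eq: "\<And>e. (if e = i then 1 else 0) * cof d Q e = (if e = i then cof d Q e else 0)" by simp
    have "det ?M = 0" using ci i by (simp add: det_stk_lin eq)
    then have "det (transpose_mat ?M) = 0" by (simp add: det_transpose[OF stk_carrier])
    then obtain w where w: "w \<in> carrier_vec (Suc d)" "w \<noteq> 0\<^sub>v (Suc d)" "transpose_mat ?M *\<^sub>v w = 0\<^sub>v (Suc d)"
      using det_0_iff_vec_prod_zero[of "transpose_mat ?M" "Suc d"] by auto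
    have wc: "(\<Sum>r<d. w $ r * Q r c) + (if c = i then w $ d else 0) = 0" if c: "c \<le> d" for c
    proof -
      have c': "c < Suc d" using c by simp
      have "(transpose_mat ?M *\<^sub>v w) $ c = 0" using w(3) c by simp
      then have "(\<Sum>r<Suc d. ?M $$ (r, c) * w $ r) = 0"
        using c' w(1) by (simp add: scalar_prod_def atLeast0LessThan mult.commute)
      then show ?thesis using c by (cases "c = i") (simp_all add: stk_def mult.commute)
    qed
    have "0 = (\<Sum>c\<le>d. v $ c * ((\<Sum>r<d. w $ r * Q r c) + (if c = i then w $ d else 0)))"
      using wc by simp
    also have "\<dots> = (\<Sum>r<d. w $ r * (\<Sum>c\<le>d. Q r c * v $ c)) + v $ i * w $ d"
    proof -
      have 1: "(\<Sum>c\<le>d. v $ c * (if c = i then w $ d else 0)) = v $ i * w $ d"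
        using i by (simp add: if_distrib cong: if_cong)
      have 2: "(\<Sum>c\<le>d. v $ c * (\<Sum>r<d. w $ r * Q r c)) = (\<Sum>r<d. w $ r * (\<Sum>c\<le>d. Q r c * v $ c))"
        unfolding sum_distrib_left by (subst sum.swap) (simp add: mult_ac)
      show ?thesis unfolding distrib_left sum.distrib 1 2 ..
    qed
    also have "\<dots> = v $ i * w $ d" using Qv by simp
    finally have wd: "w $ d = 0" using i by simp
    have "\<forall>e\<le>d. (\<Sum>a<d. w $ a * Q a e) = 0"
    proof (intro allI impI)
      fix e assume e: "e \<le> d"
      show "(\<Sum>a<d. w $ a * Q a e) = 0" using wc[OF e] wd by (cases "e = i") simp_all
    qed
    then have "\<forall>r<d. w $ r = 0" by (rule ind)
    with wd have "w = 0\<^sub>v (Suc d)" using w(1) by (intro eq_vecI) (auto simp: less_Suc_eq)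
    with w(2) show False by simp
  qed
qed



lemma sum_Pow_Suc:
  "(\<Sum>S\<in>Pow {..<Suc m}. f S) = (\<Sum>S\<in>Pow {..<m}. f S) + (\<Sum>S\<in>Pow {..<m}. f (insert m S))"
proof -
  have "Pow {..<Suc m} = Pow {..<m} \<union> insert m ` Pow {..<m}"
    by (simp add: lessThan_Suc Pow_insert)
  moreover have "Pow {..<m} \<inter> insert m ` Pow {..<m} = {}" by auto
  moreover have "inj_on (insert m) (Pow {..<m})"
    by (rule inj_onI) (auto simp: insert_ident subset_eq)
  ultimately show ?thesis
    by (simp add: sum.union_disjoint sum.reindex)
qed

lemma polar_gen:
  fixes x :: "nat \<Rightarrow> 'b::comm_ring_1"
  shows "p \<le> m \<Longrightarrow> (\<Sum>S\<in>Pow {..<m}. (-1)^(m - card S) * (y + (\<Sum>k\<in>S. x k))^p) =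
     (if p = m then of_nat (fact m) * (\<Prod>k<m. x k) else 0)"
proof (induction m arbitrary: p y)
  case 0
  then show ?case by simp
next
  case (Suc m)
  let ?s = "\<lambda>S. y + (\<Sum>k\<in>S. x k)"
  have ins: "S \<in> Pow {..<m} \<Longrightarrow> card (insert m S) = Suc (card S) \<and> (\<Sum>k\<in>insert m S. x k) = x m + (\<Sum>k\<in>S. x k)" for S
  proof -
    assume "S \<in> Pow {..<m}"
    then have f: "finite S" "m \<notin> S" by (auto intro: finite_subset[of _ "{..<m}"])
    then show ?thesis by simp
  qed
  have sgn: "S \<in> Pow {..<m} \<Longrightarrow> (-1::'b)^(Suc m - card S) = - ((-1)^(m - card S))" for S
  proof -
    assume "S \<in> Pow {..<m}"
    then have "card S \<le> m" using card_mono[of "{..<m}" S] by auto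
    then have "Suc m - card S = Suc (m - card S)" by simp
    then show ?thesis by simp
  qed
  have "(\<Sum>S\<in>Pow {..<Suc m}. (-1)^(Suc m - card S) * (?s S)^p) =
     (\<Sum>S\<in>Pow {..<m}. (-1)^(m - card S) * (((?s S) + x m)^p - (?s S)^p))"
  proof -
    have A: "(\<Sum>S\<in>Pow {..<m}. (-1)^(Suc m - card S) * (?s S)^p) = - (\<Sum>S\<in>Pow {..<m}. (-1)^(m - card S) * (?s S)^p)"
      unfolding sum_negf[symmetric] by (rule sum.cong) (simp_all add: sgn)
    have B: "(\<Sum>S\<in>Pow {..<m}. (-1)^(Suc m - card (insert m S)) * (?s (insert m S))^p) = (\<Sum>S\<in>Pow {..<m}. (-1)^(m - card S) * ((?s S) + x m)^p)"
      by (rule sum.cong) (simp_all add: ins add_ac)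
    show ?thesis unfolding sum_Pow_Suc A B right_diff_distrib sum_subtractf by simp
  qed
  also have "\<dots> = (\<Sum>S\<in>Pow {..<m}. (-1)^(m - card S) * (\<Sum>j<p. of_nat (p choose j) * x m ^ (p - j) * (?s S)^j))"
  proof (rule sum.cong[OF refl])
    fix S
    have "((?s S) + x m)^p = (\<Sum>j\<le>p. of_nat (p choose j) * (?s S)^j * x m ^ (p - j))"
      by (rule binomial_ring)
    also have "\<dots> = (\<Sum>j<p. of_nat (p choose j) * x m ^ (p - j) * (?s S)^j) + (?s S)^p"
      by (simp add: lessThan_Suc_atMost[symmetric] mult_ac)
    finally show "(-1)^(m - card S) * (((?s S) + x m)^p - (?s S)^p) =
      (-1)^(m - card S) * (\<Sum>j<p. of_nat (p choose j) * x m ^ (p - j) * (?s S)^j)" by simp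
  qed
  also have "\<dots> = (\<Sum>j<p. of_nat (p choose j) * x m ^ (p - j) *
       (\<Sum>S\<in>Pow {..<m}. (-1)^(m - card S) * (?s S)^j))"
    by (simp add: sum_distrib_left sum_distrib_right mult_ac sum.swap[of _ "Pow {..<m}"])
  also have "\<dots> = (\<Sum>j<p. of_nat (p choose j) * x m ^ (p - j) *
       (if j = m then of_nat (fact m) * (\<Prod>k<m. x k) else 0))"
    using Suc.prems by (intro sum.cong refl) (subst Suc.IH, auto)
  also have "\<dots> = (if p = Suc m then of_nat (fact (Suc m)) * (\<Prod>k<Suc m. x k) else 0)"
  proof (cases "p = Suc m")
    case True
    have "(\<Sum>j<p. of_nat (p choose j) * x m ^ (p - j) *
       (if j = m then of_nat (fact m) * (\<Prod>k<m. x k) else (0::'b))) =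
       of_nat (Suc m choose m) * x m * (of_nat (fact m) * (\<Prod>k<m. x k))"
      using True by (simp add: if_distrib cong: if_cong)
    also have "\<dots> = of_nat (fact (Suc m)) * (\<Prod>k<Suc m. x k)"
      by (simp add: binomial_Suc_n algebra_simps)
    finally show ?thesis using True by simp
  next
    case False
    then have "p \<le> m" using Suc.prems by simp
    then show ?thesis using False by (intro trans[OF sum.neutral]) auto
  qed
  finally show ?case .
qed

lemma polar:
  fixes x :: "nat \<Rightarrow> 'b::comm_ring_1"
  shows "(\<Sum>S\<in>Pow {..<m}. (-1)^(m - card S) * (\<Sum>k\<in>S. x k)^m) = of_nat (fact m) * (\<Prod>k<m. x k)"
  using polar_gen[where p=m and m=m and y=0 and x=x] by simp



lemma factor_poly:
  fixes p :: "'a::field poly"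
  assumes K: "alg_closed TYPE('a)"
  shows "p \<noteq> 0 \<Longrightarrow> degree p \<le> m \<Longrightarrow> \<exists>c0 \<alpha> \<beta>. c0 \<noteq> 0 \<and> (\<forall>k<m. \<alpha> k \<noteq> 0 \<or> \<beta> k \<noteq> 0) \<and>
      p = Polynomial.smult c0 (\<Prod>k<m. [:- \<beta> k, \<alpha> k:])"
proof (induction m arbitrary: p)
  case 0
  then have "p = [:coeff p 0:]" using degree_0_id[of p] by simp
  moreover have "coeff p 0 \<noteq> 0" using 0 calculation by (metis pCons_0_0)
  ultimately show ?case by (intro exI[of _ "coeff p 0"]) auto
next
  case (Suc m)
  show ?case
  proof (cases "degree p = 0")
    case True
    then obtain c0 \<alpha> \<beta> where h: "c0 \<noteq> 0" "\<forall>k<m. \<alpha> k \<noteq> 0 \<or> \<beta> k \<noteq> 0" "p = Polynomial.smult c0 (\<Prod>k<m. [:- \<beta> k, \<alpha> k:])"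
      using Suc.IH[of p] Suc.prems by auto
    let ?a = "\<alpha>(m := 0)" and ?b = "\<beta>(m := -1)"
    have "(\<Prod>k<Suc m. [:- ?b k, ?a k:]) = (\<Prod>k<m. [:- \<beta> k, \<alpha> k:])"
      by (simp add: one_pCons)
    then show ?thesis using h by (intro exI[of _ c0] exI[of _ ?a] exI[of _ ?b]) (auto simp: less_Suc_eq)
  next
    case False
    then obtain r where "poly p r = 0" using K unfolding alg_closed_def by blast
    then obtain q where pq: "p = [:-r, 1:] * q" using poly_eq_0_iff_dvd by (metis dvdE)
    have q0: "q \<noteq> 0" using Suc.prems pq by auto
    have "degree p = Suc (degree q)" unfolding pq using q0 by (subst degree_mult_eq) auto
    then have "degree q \<le> m" using Suc.prems by simp
    then obtain c0 \<alpha> \<beta> where h: "c0 \<noteq> 0" "\<forall>k<m. \<alpha> k \<noteq> 0 \<or> \<beta> k \<noteq> 0" "q = Polynomial.smult c0 (\<Prod>k<m. [:- \<beta> k, \<alpha> k:])"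
      using Suc.IH[OF q0] by auto
    let ?a = "\<alpha>(m := 1)" and ?b = "\<beta>(m := r)"
    have "(\<Prod>k<Suc m. [:- ?b k, ?a k:]) = (\<Prod>k<m. [:- \<beta> k, \<alpha> k:]) * [:-r, 1:]"
      by simp
    then have "p = Polynomial.smult c0 (\<Prod>k<Suc m. [:- ?b k, ?a k:])" using pq h(3) by (simp add: mult_ac)
    then show ?thesis using h by (intro exI[of _ c0] exI[of _ ?a] exI[of _ ?b]) (auto simp: less_Suc_eq)
  qed
qed



definition mnm :: "nat \<Rightarrow> (nat \<Rightarrow> nat) \<Rightarrow> (nat \<Rightarrow> 'a::comm_ring_1) \<Rightarrow> 'a" where
  "mnm n \<alpha> x = (\<Prod>i\<le>n. x i ^ \<alpha> i)"

lemma finite_mon_exps: "finite (mon_exps n d)"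
proof -
  let ?f = "\<lambda>xs i. if i < length xs then xs ! i else (0::nat)"
  have "mon_exps n d \<subseteq> ?f ` {xs. set xs \<subseteq> {..d} \<and> length xs = Suc n}"
  proof
    fix \<alpha> assume a: "\<alpha> \<in> mon_exps n d"
    have le: "\<alpha> i \<le> d" if "i \<le> n" for i
    proof -
      have "\<alpha> i \<le> (\<Sum>j\<le>n. \<alpha> j)" using that by (intro member_le_sum) auto
      then show ?thesis using a by (simp add: mon_exps_def)
    qed
    have "\<alpha> = ?f (map \<alpha> [0..<Suc n])"
      using a by (auto simp: mon_exps_def fun_eq_iff less_Suc_eq_le simp del: upt_Suc)
    moreover have "map \<alpha> [0..<Suc n] \<in> {xs. set xs \<subseteq> {..d} \<and> length xs = Suc n}"
      using le by auto
    ultimately show "\<alpha> \<in> ?f ` {xs. set xs \<subseteq> {..d} \<and> length xs = Suc n}" by blast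
  qed
  moreover have "finite {xs. set xs \<subseteq> {..d} \<and> length xs = Suc n}"
    by (rule finite_lists_length_eq) simp
  ultimately show ?thesis by (rule finite_subset[OF _ finite_imageI])
qed

lemma forms_iff: "f \<in> forms n d \<longleftrightarrow> (\<exists>c. f = (\<lambda>x. \<Sum>\<alpha>\<in>mon_exps n d. c \<alpha> * mnm n \<alpha> x))"
  by (simp add: forms_def mnm_def)

lemma forms_lin:
  assumes "f \<in> forms n d" "g \<in> forms n d"
  shows "(\<lambda>x. a * f x + b * g x) \<in> forms n d"
proof -
  obtain c1 c2 where "f = (\<lambda>x. \<Sum>\<alpha>\<in>mon_exps n d. c1 \<alpha> * mnm n \<alpha> x)" "g = (\<lambda>x. \<Sum>\<alpha>\<in>mon_exps n d. c2 \<alpha> * mnm n \<alpha> x)"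
    using assms by (auto simp: forms_iff)
  then have "(\<lambda>x. a * f x + b * g x) = (\<lambda>x. \<Sum>\<alpha>\<in>mon_exps n d. (a * c1 \<alpha> + b * c2 \<alpha>) * mnm n \<alpha> x)"
    by (auto simp: fun_eq_iff sum_distrib_left sum.distrib algebra_simps)
  then show ?thesis by (auto simp: forms_iff)
qed

lemma forms_zero: "(\<lambda>x. 0) \<in> forms n d"
  unfolding forms_iff by (rule exI[of _ "\<lambda>_. 0"]) simp

lemma forms_sum:
  assumes "finite A" "\<forall>a\<in>A. h a \<in> forms n d"
  shows "(\<lambda>x. \<Sum>a\<in>A. c a * h a x) \<in> forms n d"
  using assms
proof (induction A rule: finite_induct)
  case empty
  then show ?case by (simp add: forms_zero)
next
  case (insert a A)
  have "(\<lambda>x. 1 * (\<Sum>a\<in>A. c a * h a x) + c a * h a x) \<in> forms n d"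
    using insert by (intro forms_lin) auto
  then show ?case using insert by (simp add: add.commute)
qed

lemma mono_in_forms:
  fixes c :: "'a::comm_ring_1"
  assumes "\<alpha> \<in> mon_exps n d"
  shows "(\<lambda>x. c * mnm n \<alpha> x) \<in> forms n d"
proof -
  have "(\<lambda>x. c * mnm n \<alpha> x) = (\<lambda>x. \<Sum>\<beta>\<in>mon_exps n d. (if \<beta> = \<alpha> then c else 0) * mnm n \<beta> x)"
  proof
    fix x
    have e: "\<And>\<beta>. (if \<beta> = \<alpha> then c else 0) * mnm n \<beta> x = (if \<beta> = \<alpha> then c * mnm n \<beta> x else 0)" by simp
    show "c * mnm n \<alpha> x = (\<Sum>\<beta>\<in>mon_exps n d. (if \<beta> = \<alpha> then c else 0) * mnm n \<beta> x)"
      unfolding e using assms finite_mon_exps by simp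
  qed
  then show ?thesis unfolding forms_iff by (rule exI[where x="\<lambda>\<beta>. if \<beta> = \<alpha> then c else 0"])
qed

lemma mono_in_forms1: "\<alpha> \<in> mon_exps n d \<Longrightarrow> mnm n \<alpha> \<in> forms n d"
  using mono_in_forms[of \<alpha> n d 1] by simp

lemma mono_step:
  assumes "\<alpha> \<in> mon_exps n m" "i \<le> n"
  shows "\<alpha>(i := Suc (\<alpha> i)) \<in> mon_exps n (Suc m)"
    and "mnm n \<alpha> x * x i = mnm n (\<alpha>(i := Suc (\<alpha> i))) x"
proof -
  have "(\<Sum>j\<le>n. (\<alpha>(i := Suc (\<alpha> i))) j) = (\<Sum>j\<le>n. \<alpha> j + (if j = i then 1 else 0))"
    by (rule sum.cong) auto
  also have "\<dots> = Suc m" using assms by (simp add: sum.distrib mon_exps_def)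
  finally show "\<alpha>(i := Suc (\<alpha> i)) \<in> mon_exps n (Suc m)" using assms by (auto simp: mon_exps_def)
  have "mnm n (\<alpha>(i := Suc (\<alpha> i))) x = (\<Prod>j\<le>n. x j ^ \<alpha> j * (if j = i then x j else 1))"
    unfolding mnm_def by (rule prod.cong) auto
  also have "\<dots> = mnm n \<alpha> x * x i" using assms by (simp add: prod.distrib mnm_def)
  finally show "mnm n \<alpha> x * x i = mnm n (\<alpha>(i := Suc (\<alpha> i))) x" by simp
qed

lemma forms_mult_lin:
  assumes "f \<in> forms n m"
  shows "(\<lambda>x. f x * lin_form n u x) \<in> forms n (Suc m)"
proof -
  obtain c where f: "f = (\<lambda>x. \<Sum>\<alpha>\<in>mon_exps n m. c \<alpha> * mnm n \<alpha> x)"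
    using assms by (auto simp: forms_iff)
  have "(\<lambda>x. f x * lin_form n u x) = (\<lambda>x. \<Sum>\<alpha>\<in>mon_exps n m. c \<alpha> * (\<Sum>i\<le>n. u i * mnm n (\<alpha>(i := Suc (\<alpha> i))) x))"
  proof
    fix x
    have "f x * lin_form n u x = (\<Sum>\<alpha>\<in>mon_exps n m. c \<alpha> * (\<Sum>i\<le>n. u i * (mnm n \<alpha> x * x i)))"
      unfolding f lin_form_def sum_distrib_right sum_distrib_left by (subst sum.swap) (simp add: mult_ac)
    also have "\<dots> = (\<Sum>\<alpha>\<in>mon_exps n m. c \<alpha> * (\<Sum>i\<le>n. u i * mnm n (\<alpha>(i := Suc (\<alpha> i))) x))"
      by (intro sum.cong refl arg_cong2[where f="(*)"]) (simp add: mono_step)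
    finally show "f x * lin_form n u x = (\<Sum>\<alpha>\<in>mon_exps n m. c \<alpha> * (\<Sum>i\<le>n. u i * mnm n (\<alpha>(i := Suc (\<alpha> i))) x))" .
  qed
  also have "\<dots> \<in> forms n (Suc m)"
  proof (rule forms_sum[OF finite_mon_exps], rule ballI)
    fix \<alpha> assume \<alpha>: "\<alpha> \<in> mon_exps n m"
    show "(\<lambda>x. \<Sum>i\<le>n. u i * mnm n (\<alpha>(i := Suc (\<alpha> i))) x) \<in> forms n (Suc m)"
      using mono_step(1)[OF \<alpha>] by (intro forms_sum ballI) (auto intro: mono_in_forms1)
  qed
  finally show ?thesis .
qed

lemma forms_pow: "(\<lambda>x. lin_form n u x ^ d) \<in> forms n d"
proof (induction d)
  case 0
  have "(\<lambda>_. 0) \<in> mon_exps n 0" by (simp add: mon_exps_def)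
  from mono_in_forms[OF this, of 1] show ?case by (simp add: mnm_def)
next
  case (Suc d)
  from forms_mult_lin[OF Suc, of u] show ?case by (simp add: mult.commute)
qed




lemma det_nat_cong:
  assumes "\<And>a b. a < k \<Longrightarrow> b < k \<Longrightarrow> M a b = M' a b"
  shows "det_nat k M = det_nat k M'"
  unfolding det_nat_def
proof (intro sum.cong refl arg_cong2[where f="(*)"] prod.cong)
  fix \<sigma> a assume "\<sigma> \<in> {\<sigma>. \<sigma> permutes {..<k}}" "a \<in> {..<k}"
  then have "\<sigma> a < k" using permutes_in_image[of \<sigma> "{..<k}" a] by simp
  then show "M a (\<sigma> a) = M' a (\<sigma> a)" using assms \<open>a \<in> {..<k}\<close> by simp
qed

lemma det_nat_zero:
  assumes "k \<ge> 1" "\<And>a b. M a b = 0"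
  shows "det_nat k M = 0"
proof -
  have "\<And>\<sigma>. (\<Prod>a<k. M a (\<sigma> a)) = 0" using assms by (intro prod_zero) (auto intro!: exI[of _ 0])
  then show ?thesis unfolding det_nat_def by simp
qed

lemma left_null:
  fixes G :: "nat \<Rightarrow> nat \<Rightarrow> 'a::field"
  shows "\<exists>z i. (\<forall>b<d. (\<Sum>e\<le>d. z e * G e b) = 0) \<and> i \<le> d \<and> z i \<noteq> 0"
proof -
  have "det (stk d (\<lambda>b e. G e b) (\<lambda>_. 0)) = 0" by (simp add: det_stk_lin)
  then obtain v where v: "v \<in> carrier_vec (Suc d)" "v \<noteq> 0\<^sub>v (Suc d)" "stk d (\<lambda>b e. G e b) (\<lambda>_. 0) *\<^sub>v v = 0\<^sub>v (Suc d)"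
    using det_0_iff_vec_prod_zero[OF stk_carrier] by blast
  have Gv: "(\<Sum>e\<le>d. v $ e * G e b) = 0" if b: "b < d" for b
  proof -
    have "(stk d (\<lambda>b e. G e b) (\<lambda>_. 0) *\<^sub>v v) $ b = 0" using v(3) b by simp
    then show ?thesis using b v(1) by (simp add: stk_def scalar_prod_def atLeast0LessThan lessThan_Suc_atMost mult.commute)
  qed
  obtain i where i: "i \<le> d" "v $ i \<noteq> 0"
  proof -
    have "\<exists>i<Suc d. v $ i \<noteq> 0"
    proof (rule ccontr)
      assume "\<not> ?thesis"
      then have "v = 0\<^sub>v (Suc d)" using v(1) by (intro eq_vecI) auto
      with v(2) show False by simp
    qed
    then show ?thesis using that by (auto simp: less_Suc_eq_le)
  qed
  show ?thesis using Gv i by blast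
qed

lemma sum_two:
  assumes "a < d"
  shows "(\<Sum>e\<le>d. Wl x y a e * X e) = x * X a + y * X (Suc a)"
proof -
  have "(\<Sum>e\<le>d. Wl x y a e * X e) = (\<Sum>e\<le>d. (if e = a then x * X e else 0) + (if e = Suc a then y * X e else 0))"
    by (rule sum.cong) (auto simp: Wl_def)
  also have "\<dots> = x * X a + y * X (Suc a)" using assms by (simp add: sum.distrib)
  finally show ?thesis .
qed

lemma coeff_monsum: "coeff (\<Sum>j\<le>m. monom (c j) j) i = (if i \<le> m then c i else 0)"
  by (simp add: coeff_sum coeff_monom)

lemma degree_monsum: "degree (\<Sum>j\<le>m. monom (c j) j) \<le> m"
  by (rule degree_le) (simp add: coeff_monsum)

lemma sum_atMost_extend: "(m::nat) \<le> M \<Longrightarrow> (\<Sum>e\<le>m. f e) = (\<Sum>e\<le>M. if e \<le> m then f e else 0)"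
proof -
  assume "m \<le> M"
  then have "{e \<in> {..M}. e \<le> m} = {..m}" by auto
  then show ?thesis by (metis (no_types) finite_atMost sum.inter_filter)
qed

lemma pCons_sum: "(\<Sum>k\<in>S. [:a k, b k:]) = [:\<Sum>k\<in>S. a k, \<Sum>k\<in>S. b k:]"
  by (induction S rule: infinite_finite_induct) auto

lemma neg1_pow_poly: "((-1::'a::comm_ring_1 poly)^k) = [:(-1)^k:]"
  by (induction k) auto

lemma psi_sum:
  assumes psi_linear: "\<forall>f\<in>forms n d. \<forall>g\<in>forms n d. \<forall>a b. \<forall>I\<in>dsubsets (n + d) d.
        \<psi> (\<lambda>x. a * f x + b * g x) I = a * \<psi> f I + b * \<psi> g I"
    and I: "I \<in> dsubsets (n + d) d"
  shows "finite A \<Longrightarrow> \<forall>a\<in>A. h a \<in> forms n d \<Longrightarrow>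
    \<psi> (\<lambda>x. \<Sum>a\<in>A. c a * h a x) I = (\<Sum>a\<in>A. c a * \<psi> (h a) I)"
proof (induction A rule: finite_induct)
  case empty
  have z: "(\<lambda>x. 0) \<in> forms n d" by (rule forms_zero)
  have "\<psi> (\<lambda>x. 0 * 0 + 0 * 0) I = 0 * \<psi> (\<lambda>x. 0) I + 0 * \<psi> (\<lambda>x. 0) I"
    using psi_linear[rule_format, where a=0 and b=0, OF z z I] by simp
  then show ?case by simp
next
  case (insert a A)
  have "\<psi> (\<lambda>x. 1 * (\<Sum>a\<in>A. c a * h a x) + c a * h a x) I = 1 * \<psi> (\<lambda>x. \<Sum>a\<in>A. c a * h a x) I + c a * \<psi> (h a) I"
  proof -
    have f1: "(\<lambda>x. \<Sum>a\<in>A. c a * h a x) \<in> forms n d" using forms_sum[of A h n d c] insert by simp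
    have f2: "h a \<in> forms n d" using insert by simp
    show ?thesis using psi_linear[rule_format, where a=1 and b="c a", OF f1 f2 I] by simp
  qed
  then show ?case using insert by (simp add: add.commute)
qed




theorem proposition2p7:
  fixes n d :: nat
    and \<psi> :: "((nat \<Rightarrow> 'a::field_char_0) \<Rightarrow> 'a) \<Rightarrow> nat set \<Rightarrow> 'a"
    and U :: "nat \<Rightarrow> nat \<Rightarrow> 'a"
  assumes K: "alg_closed TYPE('a)"
    and n: "n \<ge> 1" and d: "d \<ge> 1"
    and psi_linear: "\<forall>f\<in>forms n d. \<forall>g\<in>forms n d. \<forall>a b. \<forall>I\<in>dsubsets (n + d) d.
        \<psi> (\<lambda>x. a * f x + b * g x) I = a * \<psi> f I + b * \<psi> g I"
    and psi_powers: "\<forall>u. nonzero_lin n u \<longrightarrow>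
        (\<forall>I\<in>dsubsets (n + d) d. \<psi> (\<lambda>x. lin_form n u x ^ d) I = plucker d (phi_matrix n u) I)"
    and U_indep: "indep_rows d (n + d) U"
    and U_secant: "secant n d U"
  shows "\<exists>L c. c \<noteq> 0 \<and> (\<forall>k<d. nonzero_lin n (L k)) \<and>
           (\<forall>I\<in>dsubsets (n + d) d. \<psi> (\<lambda>x. \<Prod>k<d. lin_form n (L k) x) I = c * plucker d U I)"
proof -
  obtain g where g0: "\<exists>j\<le>n - 1. g j \<noteq> 0" and gq: "\<forall>a<d. \<exists>q. \<forall>t0 t1.
      bform (n + d - 1) (U a) t0 t1 = bform (n - 1) g t0 t1 * bform d q t0 t1"
    using U_secant unfolding secant_def by blast
  have "\<forall>a. \<exists>q. a < d \<longrightarrow> (\<forall>t0 t1. bform (n + d - 1) (U a) t0 t1 = bform (n - 1) g t0 t1 * bform d q t0 t1)"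
    using gq by blast
  then obtain q where q: "\<And>a t0 t1. a < d \<Longrightarrow> bform (n + d - 1) (U a) t0 t1 = bform (n - 1) g t0 t1 * bform d (q a) t0 t1"
    by (metis choice)
  define G1 where "G1 i = (if i \<le> n - 1 then g i else 0)" for i
  define G2 where "G2 i = (if 1 \<le> i \<and> i \<le> n then g (i - 1) else 0)" for i
  define uc where "uc a b = (\<lambda>i. a * G1 i + b * G2 i)" for a b
  define gc where "gc e c = (if e \<le> c \<and> c - e \<le> n - 1 then g (c - e) else 0)" for e c
  define Pg where "Pg = (\<Sum>j\<le>n-1. monom (g j) j)"
  have coeff_Pg: "coeff Pg i = G1 i" for i by (simp add: Pg_def coeff_monsum G1_def)

  have UA: "U a c = (\<Sum>e\<le>d. q a e * gc e c)" if a: "a < d" and c: "c < n + d" for a c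
  proof -
    define PU where "PU = (\<Sum>j\<le>n + d - 1. monom (U a j) j)"
    define PQ where "PQ = (\<Sum>e\<le>d. monom (q a e) e)"
    have "poly PU = poly (PQ * Pg)"
    proof
      fix t
      have "poly PU t = bform (n + d - 1) (U a) 1 t"
        by (simp add: PU_def bform_def poly_sum poly_monom)
      also have "\<dots> = bform (n - 1) g 1 t * bform d (q a) 1 t" using q[OF a] by simp
      also have "\<dots> = poly (PQ * Pg) t"
        by (simp add: PQ_def Pg_def bform_def poly_sum poly_monom)
      finally show "poly PU t = poly (PQ * Pg) t" .
    qed
    then have PUe: "PU = PQ * Pg" by (simp add: poly_eq_poly_eq_iff)
    have "U a c = coeff PU c" using c by (simp add: PU_def coeff_monsum)
    also have "\<dots> = (\<Sum>e\<le>c. coeff PQ e * coeff Pg (c - e))" unfolding PUe by (rule coeff_mult)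
    also have "\<dots> = (\<Sum>e\<le>c. (if e \<le> d then q a e else 0) * G1 (c - e))"
      by (simp add: PQ_def coeff_monsum coeff_Pg)
    also have "\<dots> = (\<Sum>e\<le>c + d. if e \<le> c then (if e \<le> d then q a e else 0) * G1 (c - e) else 0)"
      by (rule sum_atMost_extend) simp
    also have "\<dots> = (\<Sum>e\<le>c + d. if e \<le> d then q a e * gc e c else 0)"
      by (rule sum.cong) (auto simp: gc_def G1_def)
    also have "\<dots> = (\<Sum>e\<le>d. q a e * gc e c)"
      by (rule sum_atMost_extend[symmetric]) simp
    finally show ?thesis .
  qed

  have B1: "phi_matrix n (uc x y) a c = (\<Sum>e\<le>d. Wl x y a e * gc e c)" if a: "a < d" for a c x y
    unfolding sum_two[OF a] using n
    by (auto simp: phi_matrix_def uc_def G1_def G2_def gc_def)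

  have Qind: "\<And>cc. (\<forall>e\<le>d. (\<Sum>a<d. cc a * q a e) = 0) \<Longrightarrow> (\<forall>a<d. cc a = 0)"
  proof -
    fix cc assume h: "\<forall>e\<le>d. (\<Sum>a<d. cc a * q a e) = 0"
    have "\<forall>j<n + d. (\<Sum>a<d. cc a * U a j) = 0"
    proof (intro allI impI)
      fix j assume j: "j < n + d"
      have "(\<Sum>a<d. cc a * U a j) = (\<Sum>a<d. cc a * (\<Sum>e\<le>d. q a e * gc e j))"
        using UA j by simp
      also have "\<dots> = (\<Sum>e\<le>d. (\<Sum>a<d. cc a * q a e) * gc e j)"
        unfolding sum_distrib_left sum_distrib_right by (subst sum.swap) (simp add: mult_ac)
      also have "\<dots> = 0" using h by simp
      finally show "(\<Sum>a<d. cc a * U a j) = 0" .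
    qed
    then show "\<forall>a<d. cc a = 0" using U_indep unfolding indep_rows_def by blast
  qed
  obtain i0 where i0: "i0 \<le> d" "cof d q i0 \<noteq> 0" using cof_nonzero[OF Qind] by blast

  define p where "p = (\<Sum>e\<le>d. monom (cof d q e * of_nat (d choose e)) e)"
  have p0: "p \<noteq> 0"
  proof
    assume "p = 0"
    then have "coeff p i0 = 0" by simp
    then show False using i0 by (simp add: p_def coeff_monsum)
  qed
  have pdeg: "degree p \<le> d" unfolding p_def by (rule degree_monsum)
  obtain c0 \<alpha> \<beta> where c0: "c0 \<noteq> 0" and ab: "\<forall>k<d. \<alpha> k \<noteq> 0 \<or> \<beta> k \<noteq> 0"
    and pf: "p = Polynomial.smult c0 (\<Prod>k<d. [:- \<beta> k, \<alpha> k:])"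
    using factor_poly[OF K p0 pdeg] by blast

  have KK: "(\<Sum>S\<in>Pow {..<d}. (-1)^(d - card S) * ((\<Sum>k\<in>S. \<alpha> k)^e * (-(\<Sum>k\<in>S. \<beta> k))^(d-e)))
      = of_nat (fact d) * cof d q e / c0" if e: "e \<le> d" for e
  proof -
    let ?x = "\<lambda>k. [:- \<beta> k, \<alpha> k:]"
    let ?X = "(\<Sum>S\<in>Pow {..<d}. (-1)^(d - card S) * ((\<Sum>k\<in>S. \<alpha> k)^e * (-(\<Sum>k\<in>S. \<beta> k))^(d-e)))"
    have P: "(\<Sum>S\<in>Pow {..<d}. (-1)^(d - card S) * (\<Sum>k\<in>S. ?x k)^d) = of_nat (fact d) * (\<Prod>k<d. ?x k)"
      by (rule polar)
    have c1: "coeff (\<Sum>S\<in>Pow {..<d}. (-1)^(d - card S) * (\<Sum>k\<in>S. ?x k)^d) e = of_nat (d choose e) * ?X"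
    proof -
      have "coeff (\<Sum>S\<in>Pow {..<d}. (-1)^(d - card S) * (\<Sum>k\<in>S. ?x k)^d) e =
         (\<Sum>S\<in>Pow {..<d}. (-1)^(d - card S) * coeff ([:- (\<Sum>k\<in>S. \<beta> k), \<Sum>k\<in>S. \<alpha> k:]^d) e)"
        by (simp add: coeff_sum neg1_pow_poly pCons_sum sum_negf)
      also have "\<dots> = (\<Sum>S\<in>Pow {..<d}. (-1)^(d - card S) * (of_nat (d choose e) * (\<Sum>k\<in>S. \<alpha> k)^e * (- (\<Sum>k\<in>S. \<beta> k))^(d-e)))"
        using e by (simp add: coeff_linear_poly_power)
      also have "\<dots> = of_nat (d choose e) * ?X"
        by (simp add: sum_distrib_left mult_ac)
      finally show ?thesis .
    qed
    have "coeff p e = c0 * coeff (\<Prod>k<d. ?x k) e" using pf by simp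
    moreover have "coeff p e = cof d q e * of_nat (d choose e)" using e by (simp add: p_def coeff_monsum)
    ultimately have cp: "coeff (\<Prod>k<d. ?x k) e = cof d q e * of_nat (d choose e) / c0"
      using c0 by (simp add: field_simps)
    have c2: "coeff (of_nat (fact d) * (\<Prod>k<d. ?x k)) e = of_nat (fact d) * (cof d q e * of_nat (d choose e) / c0)"
      by (simp add: of_nat_poly cp)
    have eq: "of_nat (d choose e) * ?X = of_nat (fact d) * (cof d q e * of_nat (d choose e) / c0)"
      using c1 c2 P by simp
    have r: "(of_nat (fact d) :: 'a) * (cof d q e * of_nat (d choose e) / c0) = of_nat (d choose e) * (of_nat (fact d) * cof d q e / c0)"
      by (simp add: mult_ac)
    have nz: "(of_nat (d choose e) :: 'a) \<noteq> 0" using e by simp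
    show ?thesis using mult_left_cancel[OF nz] eq unfolding r by blast
  qed

  have PI: "\<exists>\<kappa> z. plucker d U I = \<kappa> * (\<Sum>e\<le>d. z e * cof d q e) \<and>
     (\<forall>x y. plucker d (phi_matrix n (uc x y)) I = \<kappa> * (\<Sum>e\<le>d. z e * x^e * (-y)^(d-e)))"
    if I: "I \<in> dsubsets (n + d) d" for I
  proof -
    define s where "s = sorted_list_of_set I"
    have Isub: "I \<subseteq> {..<n + d}" and cI: "card I = d" using I by (auto simp: dsubsets_def)
    have fI: "finite I" using Isub finite_subset by blast
    have ls: "length s = d" using cI fI by (simp add: s_def)
    have sb: "s ! b < n + d" if "b < d" for b
    proof -
      have "s ! b \<in> set s" using that ls by simp
      then show ?thesis using fI Isub by (auto simp: s_def)
    qed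
    obtain z i where zG: "\<forall>b<d. (\<Sum>e\<le>d. z e * gc e (s ! b)) = 0" and i: "i \<le> d" "z i \<noteq> 0"
      using left_null[of d "\<lambda>e b. gc e (s ! b)"] by blast
    define \<kappa> where "\<kappa> = det (mat (Suc d) (Suc d) (\<lambda>(e,b). if b < d then gc e (s ! b) else if e = i then 1 / z i else 0))"
    have "plucker d U I = det_nat d (\<lambda>a b. \<Sum>e\<le>d. q a e * gc e (s ! b))"
      unfolding plucker_def s_def[symmetric] by (rule det_nat_cong) (simp add: UA sb)
    also have "\<dots> = det (stk d q z) * \<kappa>" unfolding \<kappa>_def by (rule det_D[OF zG i])
    finally have 1: "plucker d U I = \<kappa> * (\<Sum>e\<le>d. z e * cof d q e)" by (simp add: det_stk_lin)
    have 2: "plucker d (phi_matrix n (uc x y)) I = \<kappa> * (\<Sum>e\<le>d. z e * x^e * (-y)^(d-e))" for x y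
    proof -
      have "plucker d (phi_matrix n (uc x y)) I = det_nat d (\<lambda>a b. \<Sum>e\<le>d. Wl x y a e * gc e (s ! b))"
        unfolding plucker_def s_def[symmetric] by (rule det_nat_cong) (simp add: B1)
      also have "\<dots> = det (stk d (Wl x y) z) * \<kappa>" unfolding \<kappa>_def by (rule det_D[OF zG i])
      finally show ?thesis by (simp add: det_E)
    qed
    show ?thesis using 1 2 by blast
  qed

  have PP: "\<psi> (\<lambda>x. lin_form n u x ^ d) I = plucker d (phi_matrix n u) I"
    if I: "I \<in> dsubsets (n + d) d" for u I
  proof (cases "nonzero_lin n u")
    case True
    then show ?thesis using psi_powers I by blast
  next
    case False
    then have u0: "\<forall>i\<le>n. u i = 0" by (auto simp: nonzero_lin_def)
    then have "(\<lambda>x. lin_form n u x ^ d) = (\<lambda>x. 0)" using d by (auto simp: lin_form_def)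
    moreover have "\<psi> (\<lambda>x. 0) I = 0" using psi_sum[OF psi_linear I, of "{}"] by simp
    moreover have "plucker d (phi_matrix n u) I = 0"
      unfolding plucker_def using d u0 by (intro det_nat_zero) (auto simp: phi_matrix_def)
    ultimately show ?thesis by simp
  qed

  have NZ: "nonzero_lin n (uc (\<alpha> k) (\<beta> k))" if k: "k < d" for k
  proof -
    define P where "P = Pg * [:\<alpha> k, \<beta> k:]"
    have Pe: "P = Polynomial.smult (\<alpha> k) Pg + pCons 0 (Polynomial.smult (\<beta> k) Pg)"
      by (simp add: P_def mult_pCons_right)
    have cP: "coeff P i = uc (\<alpha> k) (\<beta> k) i" for i
    proof (cases i)
      case 0
      then show ?thesis by (simp add: Pe coeff_Pg uc_def G2_def)
    next
      case (Suc j)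
      have "(j \<le> n - 1) = (Suc j \<le> n)" using n by arith
      then show ?thesis using Suc by (simp add: Pe coeff_Pg uc_def G1_def G2_def)
    qed
    obtain j where j: "j \<le> n - 1" "g j \<noteq> 0" using g0 by blast
    have "Pg \<noteq> 0"
    proof
      assume "Pg = 0"
      then have "coeff Pg j = 0" by simp
      then show False using j by (simp add: coeff_Pg G1_def)
    qed
    moreover have "[:\<alpha> k, \<beta> k:] \<noteq> 0" using ab k by auto
    ultimately have P0: "P \<noteq> 0" unfolding P_def by (rule no_zero_divisors)
    have "degree P \<le> degree Pg + degree [:\<alpha> k, \<beta> k:]" unfolding P_def by (rule degree_mult_le)
    also have "\<dots> \<le> (n - 1) + 1"
      using degree_monsum[where m="n - 1" and c=g] degree_pCons_le[of "\<alpha> k" "[:\<beta> k:]"] unfolding Pg_def by simp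
    finally have "degree P \<le> n" using n by simp
    moreover have "coeff P (degree P) \<noteq> 0" using P0 by simp
    ultimately show ?thesis unfolding nonzero_lin_def cP[symmetric] by blast
  qed

  have lin_sum: "(\<Sum>k\<in>S. lin_form n (uc (\<alpha> k) (\<beta> k)) x) = lin_form n (uc (\<Sum>k\<in>S. \<alpha> k) (\<Sum>k\<in>S. \<beta> k)) x" for S x
    unfolding lin_form_def uc_def
    by (subst sum.swap, rule sum.cong[OF refl]) (simp add: sum_distrib_right[symmetric] sum.distrib)

  define cS where "cS S = (-1)^(d - card S) / (of_nat (fact d) :: 'a)" for S :: "nat set"
  define LS where "LS S = uc (\<Sum>k\<in>S. \<alpha> k) (\<Sum>k\<in>S. \<beta> k)" for S :: "nat set"
  have fe: "(\<lambda>x. \<Prod>k<d. lin_form n (uc (\<alpha> k) (\<beta> k)) x) =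
      (\<lambda>x. \<Sum>S\<in>Pow {..<d}. cS S * lin_form n (LS S) x ^ d)"
  proof
    fix x
    have "of_nat (fact d) * (\<Prod>k<d. lin_form n (uc (\<alpha> k) (\<beta> k)) x) =
       (\<Sum>S\<in>Pow {..<d}. (-1)^(d - card S) * (\<Sum>k\<in>S. lin_form n (uc (\<alpha> k) (\<beta> k)) x)^d)"
      by (rule polar[symmetric])
    also have "\<dots> = (\<Sum>S\<in>Pow {..<d}. (-1)^(d - card S) * lin_form n (LS S) x ^ d)"
      by (simp add: lin_sum LS_def)
    finally have h: "of_nat (fact d) * (\<Prod>k<d. lin_form n (uc (\<alpha> k) (\<beta> k)) x) =
       (\<Sum>S\<in>Pow {..<d}. (-1)^(d - card S) * lin_form n (LS S) x ^ d)" .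
    have fd: "(of_nat (fact d) :: 'a) \<noteq> 0" by simp
    have "(\<Prod>k<d. lin_form n (uc (\<alpha> k) (\<beta> k)) x) = (\<Sum>S\<in>Pow {..<d}. (-1)^(d - card S) * lin_form n (LS S) x ^ d) / of_nat (fact d)"
      using h fd by (simp add: field_simps)
    also have "\<dots> = (\<Sum>S\<in>Pow {..<d}. cS S * lin_form n (LS S) x ^ d)"
      by (simp add: sum_divide_distrib cS_def)
    finally show "(\<Prod>k<d. lin_form n (uc (\<alpha> k) (\<beta> k)) x) = (\<Sum>S\<in>Pow {..<d}. cS S * lin_form n (LS S) x ^ d)" .
  qed

  have main: "\<psi> (\<lambda>x. \<Prod>k<d. lin_form n (uc (\<alpha> k) (\<beta> k)) x) I = (1 / c0) * plucker d U I"
    if I: "I \<in> dsubsets (n + d) d" for I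
  proof -
    obtain \<kappa> z where k1: "plucker d U I = \<kappa> * (\<Sum>e\<le>d. z e * cof d q e)"
      and k2: "\<And>x y. plucker d (phi_matrix n (uc x y)) I = \<kappa> * (\<Sum>e\<le>d. z e * x^e * (-y)^(d-e))"
      using PI[OF I] by blast
    let ?A = "\<lambda>S. \<Sum>k\<in>S. \<alpha> k" and ?B = "\<lambda>S. \<Sum>k\<in>S. \<beta> k"
    have "\<psi> (\<lambda>x. \<Prod>k<d. lin_form n (uc (\<alpha> k) (\<beta> k)) x) I =
        \<psi> (\<lambda>x. \<Sum>S\<in>Pow {..<d}. cS S * lin_form n (LS S) x ^ d) I" unfolding fe ..
    also have "\<dots> = (\<Sum>S\<in>Pow {..<d}. cS S * \<psi> (\<lambda>x. lin_form n (LS S) x ^ d) I)"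
      by (rule psi_sum[OF psi_linear I]) (auto intro: forms_pow)
    also have "\<dots> = (\<Sum>S\<in>Pow {..<d}. cS S * (\<kappa> * (\<Sum>e\<le>d. z e * ?A S^e * (-?B S)^(d-e))))"
      by (simp add: PP[OF I] LS_def k2)
    also have "\<dots> = \<kappa> / of_nat (fact d) * (\<Sum>e\<le>d. z e *
         (\<Sum>S\<in>Pow {..<d}. (-1)^(d - card S) * (?A S^e * (-?B S)^(d-e))))"
      unfolding sum_distrib_left
      by (subst sum.swap) (simp add: cS_def field_simps)
    also have "\<dots> = \<kappa> / of_nat (fact d) * (\<Sum>e\<le>d. z e * (of_nat (fact d) * cof d q e / c0))"
      by (simp add: KK)
    also have "\<dots> = (1 / c0) * plucker d U I"
      unfolding k1 by (simp add: sum_distrib_left sum_divide_distrib field_simps)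
    finally show ?thesis .
  qed
  show ?thesis
    using c0 NZ main by (intro exI[of _ "\<lambda>k. uc (\<alpha> k) (\<beta> k)"] exI[of _ "1 / c0"]) auto
qed


end
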